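(* Consider a finite set of time periods $\mathcal{T}$ and a finite set of user types $\mathcal{K}=\{1,\dots,K\}$, where type $k$ has aggregate demand $D_k^t\ge 0$ and value of lost load $V_k^t$ in period $t$, with $V_1^t\le\cdots\le V_K^t$. Let $D_a^t=\sum_kD_k^t>0$. For capacity $r\ge0$ and random variables $\Theta^t$ supported in $[0,1]$, let $s^t=\min(D_a^t,r\Theta^t)$, $d_k^t=\frac{D_k^t}{D_a^t}s^t$, $C_s^t(r,\Theta^t)=\sum_k(V_k^t-p)(D_k^t-d_k^t)$. Fix $p$ with $p\le V_1^t$ for all $t$, $c_r>0$, $\xi\ge0$. Let $f^{\mathrm{No}}(r)=\sum_tp\,\mathbb{E}[s^t]-c_rr$ and $f^{\mathrm{Ins}}(r,\pi)=\sum_k\sum_t\pi_k^tD_k^t+\sum_tp\,\mathbb{E}[s^t]-c_rr-\sum_t\mathbb{E}[C_s^t(r,\Theta^t)]$. Let $(r^*,\pi^* )$ be the optimal solution of Problem-Ins: minimize $\sum_k\sum_t\pi_k^tD_k^t$ over $r\ge0,\pi$ subject to $f^{\mathrm{Ins}}(r,\pi)\ge\xi$, $\pi_k^t-\pi_m^t=(V_k^t-V_m^t)\mathbb{E}[1-s^t/D_a^t]$ for all $t,m,k$, and $0\le\pi_k^t\le(V_k^t-p)\mathbb{E}[1-s^t/D_a^t]$ for all $t,k$. Let $r^\ddagger$ be the optimal solution of Problem-NoIns: maximize $r\ge0$ subject to $f^{\mathrm{No}}(r)\ge\xi$. Then the users' total cost under the insurance-providing utility, $\sum_t\sum_k(\pi_k^{t*}+p)D_k^t$,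 is no larger than the users' total cost under the no-insurance utility, $\sum_t\big(p\,\mathbb{E}[s^t(r^\ddagger,\Theta^t)]+\sum_kV_k^t\,\mathbb{E}[D_k^t-d_k^t(r^\ddagger,\Theta^t)]\big)$.
   Context: Expectations are over $\Theta^t$. Under the insurance contract, a user of type $k$ with demand $D_i^t$ who buys the type-$k$ item pays $\sum_t(\pi_k^t+p)D_i^t$ (lost load is fully reimbursed); without insurance, a user pays the electricity bill $p$ on delivered energy $d_i^t=\frac{D_i^t}{D_a^t}s^t$ and incurs lost-load cost $V_i^t(D_i^t-d_i^t)$ in expectation. The problems are assumed feasible with optimal solutions as described. *)

theory Defs
  imports "HOL-Probability.Probability"
begin

definition Dagg :: "nat \<Rightarrow> (nat \<Rightarrow> 't \<Rightarrow> real) \<Rightarrow> 't \<Rightarrow> real" where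
  "Dagg K D t = (\<Sum>k=1..K. D k t)"

definition supplied :: "nat \<Rightarrow> (nat \<Rightarrow> 't \<Rightarrow> real) \<Rightarrow> 't \<Rightarrow> real \<Rightarrow> real \<Rightarrow> real" where
  "supplied K D t r \<theta> = min (Dagg K D t) (r * \<theta>)"

definition delivered :: "nat \<Rightarrow> (nat \<Rightarrow> 't \<Rightarrow> real) \<Rightarrow> nat \<Rightarrow> 't \<Rightarrow> real \<Rightarrow> real \<Rightarrow> real" where
  "delivered K D k t r \<theta> = D k t / Dagg K D t * supplied K D t r \<theta>"

definition Cs :: "nat \<Rightarrow> (nat \<Rightarrow> 't \<Rightarrow> real) \<Rightarrow> (nat \<Rightarrow> 't \<Rightarrow> real) \<Rightarrow> real \<Rightarrow> 't \<Rightarrow> real \<Rightarrow> real \<Rightarrow> real" where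
  "Cs K D V p t r \<theta> = (\<Sum>k=1..K. (V k t - p) * (D k t - delivered K D k t r \<theta>))"

definition f_No :: "'w measure \<Rightarrow> 't set \<Rightarrow> nat \<Rightarrow> (nat \<Rightarrow> 't \<Rightarrow> real) \<Rightarrow> real \<Rightarrow> real
    \<Rightarrow> ('t \<Rightarrow> 'w \<Rightarrow> real) \<Rightarrow> real \<Rightarrow> real" where
  "f_No M T K D p cr \<Theta> r =
     (\<Sum>t\<in>T. p * (\<integral>\<omega>. supplied K D t r (\<Theta> t \<omega>) \<partial>M)) - cr * r"

definition f_Ins :: "'w measure \<Rightarrow> 't set \<Rightarrow> nat \<Rightarrow> (nat \<Rightarrow> 't \<Rightarrow> real) \<Rightarrow> (nat \<Rightarrow> 't \<Rightarrow> real)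
    \<Rightarrow> real \<Rightarrow> real \<Rightarrow> ('t \<Rightarrow> 'w \<Rightarrow> real) \<Rightarrow> real \<Rightarrow> (nat \<Rightarrow> 't \<Rightarrow> real) \<Rightarrow> real" where
  "f_Ins M T K D V p cr \<Theta> r \<pi> =
     (\<Sum>k=1..K. \<Sum>t\<in>T. \<pi> k t * D k t)
     + (\<Sum>t\<in>T. p * (\<integral>\<omega>. supplied K D t r (\<Theta> t \<omega>) \<partial>M)) - cr * r
     - (\<Sum>t\<in>T. (\<integral>\<omega>. Cs K D V p t r (\<Theta> t \<omega>) \<partial>M))"

definition unserved :: "'w measure \<Rightarrow> nat \<Rightarrow> (nat \<Rightarrow> 't \<Rightarrow> real) \<Rightarrow> ('t \<Rightarrow> 'w \<Rightarrow> real)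
    \<Rightarrow> 't \<Rightarrow> real \<Rightarrow> real" where
  "unserved M K D \<Theta> t r = (\<integral>\<omega>. 1 - supplied K D t r (\<Theta> t \<omega>) / Dagg K D t \<partial>M)"

definition Ins_feasible :: "'w measure \<Rightarrow> 't set \<Rightarrow> nat \<Rightarrow> (nat \<Rightarrow> 't \<Rightarrow> real) \<Rightarrow> (nat \<Rightarrow> 't \<Rightarrow> real)
    \<Rightarrow> real \<Rightarrow> real \<Rightarrow> real \<Rightarrow> ('t \<Rightarrow> 'w \<Rightarrow> real) \<Rightarrow> real \<Rightarrow> (nat \<Rightarrow> 't \<Rightarrow> real) \<Rightarrow> bool" where
  "Ins_feasible M T K D V p cr \<xi> \<Theta> r \<pi> \<longleftrightarrow>
     r \<ge> 0 \<and> f_Ins M T K D V p cr \<Theta> r \<pi> \<ge> \<xi>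
     \<and> (\<forall>t\<in>T. \<forall>k\<in>{1..K}. \<forall>m\<in>{1..K}.
          \<pi> k t - \<pi> m t = (V k t - V m t) * unserved M K D \<Theta> t r)
     \<and> (\<forall>t\<in>T. \<forall>k\<in>{1..K}.
          0 \<le> \<pi> k t \<and> \<pi> k t \<le> (V k t - p) * unserved M K D \<Theta> t r)"

definition Ins_optimal :: "'w measure \<Rightarrow> 't set \<Rightarrow> nat \<Rightarrow> (nat \<Rightarrow> 't \<Rightarrow> real) \<Rightarrow> (nat \<Rightarrow> 't \<Rightarrow> real)
    \<Rightarrow> real \<Rightarrow> real \<Rightarrow> real \<Rightarrow> ('t \<Rightarrow> 'w \<Rightarrow> real) \<Rightarrow> real \<Rightarrow> (nat \<Rightarrow> 't \<Rightarrow> real) \<Rightarrow> bool" where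
  "Ins_optimal M T K D V p cr \<xi> \<Theta> r \<pi> \<longleftrightarrow>
     Ins_feasible M T K D V p cr \<xi> \<Theta> r \<pi>
     \<and> (\<forall>r' \<pi>'. Ins_feasible M T K D V p cr \<xi> \<Theta> r' \<pi>' \<longrightarrow>
          (\<Sum>k=1..K. \<Sum>t\<in>T. \<pi> k t * D k t) \<le> (\<Sum>k=1..K. \<Sum>t\<in>T. \<pi>' k t * D k t))"

definition NoIns_optimal :: "'w measure \<Rightarrow> 't set \<Rightarrow> nat \<Rightarrow> (nat \<Rightarrow> 't \<Rightarrow> real)
    \<Rightarrow> real \<Rightarrow> real \<Rightarrow> real \<Rightarrow> ('t \<Rightarrow> 'w \<Rightarrow> real) \<Rightarrow> real \<Rightarrow> bool" where
  "NoIns_optimal M T K D p cr \<xi> \<Theta> r \<longleftrightarrow>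
     r \<ge> 0 \<and> f_No M T K D p cr \<Theta> r \<ge> \<xi>
     \<and> (\<forall>r'. r' \<ge> 0 \<and> f_No M T K D p cr \<Theta> r' \<ge> \<xi> \<longrightarrow> r' \<le> r)"

end

theory Submission
  imports Defs
begin

theorem proposition3:
  fixes M :: "'w measure" and T :: "'t set" and K :: nat
    and D V :: "nat \<Rightarrow> 't \<Rightarrow> real" and p cr \<xi> :: real
    and \<Theta> :: "'t \<Rightarrow> 'w \<Rightarrow> real"
    and rs rd :: real and \<pi>s :: "nat \<Rightarrow> 't \<Rightarrow> real"
  assumes "prob_space M"
    and "finite T"
    and "K \<ge> 1"
    and "\<And>k t. k \<in> {1..K} \<Longrightarrow> t \<in> T \<Longrightarrow> D k t \<ge> 0"
    and "\<And>t. t \<in> T \<Longrightarrow> Dagg K D t > 0"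
    and "\<And>k m t. k \<in> {1..K} \<Longrightarrow> m \<in> {1..K} \<Longrightarrow> k \<le> m \<Longrightarrow> t \<in> T \<Longrightarrow> V k t \<le> V m t"
    and "\<And>t. t \<in> T \<Longrightarrow> \<Theta> t \<in> borel_measurable M"
    and "\<And>t \<omega>. t \<in> T \<Longrightarrow> \<omega> \<in> space M \<Longrightarrow> 0 \<le> \<Theta> t \<omega> \<and> \<Theta> t \<omega> \<le> 1"
    and "\<And>t. t \<in> T \<Longrightarrow> p \<le> V 1 t"
    and "cr > 0"
    and "\<xi> \<ge> 0"
    and "Ins_optimal M T K D V p cr \<xi> \<Theta> rs \<pi>s"
    and "NoIns_optimal M T K D p cr \<xi> \<Theta> rd"
  shows "(\<Sum>t\<in>T. \<Sum>k=1..K. (\<pi>s k t + p) * D k t)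
         \<le> (\<Sum>t\<in>T. p * (\<integral>\<omega>. supplied K D t rd (\<Theta> t \<omega>) \<partial>M)
               + (\<Sum>k=1..K. V k t * (\<integral>\<omega>. D k t - delivered K D k t rd (\<Theta> t \<omega>) \<partial>M)))"
proof -
  interpret prob_space M by fact
  have rd0: "rd \<ge> 0" and fno: "f_No M T K D p cr \<Theta> rd \<ge> \<xi>"
    using assms(13) unfolding NoIns_optimal_def by auto
  define S where "S t = (\<integral>\<omega>. supplied K D t rd (\<Theta> t \<omega>) \<partial>M)" for t
  define Da where "Da t = Dagg K D t" for t
  have int: "integrable M (\<lambda>\<omega>. supplied K D t rd (\<Theta> t \<omega>))" if t: "t \<in> T" for t
  proof (rule integrable_const_bound[where B="Da t + rd"])
    show "AE x in M. norm (supplied K D t rd (\<Theta> t x)) \<le> Da t + rd"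
    proof (rule AE_I2)
      fix x assume x: "x \<in> space M"
      have "0 \<le> \<Theta> t x" "\<Theta> t x \<le> 1" using assms(8)[OF t x] by auto
      moreover have "Da t > 0" using assms(5)[OF t] Da_def by simp
      ultimately have "0 \<le> rd * \<Theta> t x" "rd * \<Theta> t x \<le> rd" using rd0
        by (auto simp: mult_left_le)
      then show "norm (supplied K D t rd (\<Theta> t x)) \<le> Da t + rd"
        using \<open>Da t > 0\<close> unfolding supplied_def Da_def by auto
    qed
    show "(\<lambda>\<omega>. supplied K D t rd (\<Theta> t \<omega>)) \<in> borel_measurable M"
      unfolding supplied_def using assms(7)[OF t] by measurable
  qed
  have Sle: "S t \<le> Da t" if t: "t \<in> T" for t
  proof -
    have "S t \<le> (\<integral>\<omega>. Da t \<partial>M)" unfolding S_def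
      by (rule integral_mono[OF int[OF t]]) (auto simp: supplied_def Da_def)
    then show ?thesis by (simp add: prob_space)
  qed
  have uns: "unserved M K D \<Theta> t rd = 1 - S t / Da t" if t: "t \<in> T" for t
    unfolding unserved_def S_def Da_def
    using int[OF t] by (simp add: prob_space)
  have del: "(\<integral>\<omega>. D k t - delivered K D k t rd (\<Theta> t \<omega>) \<partial>M) = D k t * (1 - S t / Da t)"
    if t: "t \<in> T" for t k
    unfolding delivered_def S_def Da_def
    using int[OF t] assms(5)[OF t] by (simp add: prob_space field_simps)
  have cs: "(\<integral>\<omega>. Cs K D V p t rd (\<Theta> t \<omega>) \<partial>M) = (\<Sum>k=1..K. (V k t - p) * (D k t * (1 - S t / Da t)))"
    if t: "t \<in> T" for t
  proof -
    have "(\<integral>\<omega>. Cs K D V p t rd (\<Theta> t \<omega>) \<partial>M) =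
      (\<Sum>k=1..K. (\<integral>\<omega>. (V k t - p) * (D k t - delivered K D k t rd (\<Theta> t \<omega>)) \<partial>M))"
      unfolding Cs_def
    proof (rule Bochner_Integration.integral_sum)
      fix k assume "k \<in> {1..K}"
      show "integrable M (\<lambda>\<omega>. (V k t - p) * (D k t - delivered K D k t rd (\<Theta> t \<omega>)))"
        using int[OF t] by (auto simp: delivered_def)
    qed
    also have "\<dots> = (\<Sum>k=1..K. (V k t - p) * (D k t * (1 - S t / Da t)))"
      using del[OF t] int[OF t] by (simp add: delivered_def)
    finally show ?thesis .
  qed
  define \<pi>' where "\<pi>' k t = (V k t - p) * unserved M K D \<Theta> t rd" for k t
  have u0: "unserved M K D \<Theta> t rd \<ge> 0" if t: "t \<in> T" for t
    using uns[OF t] Sle[OF t] assms(5)[OF t] by (simp add: Da_def)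
  have Vp: "V k t - p \<ge> 0" if "t \<in> T" "k \<in> {1..K}" for t k
    using assms(6)[of 1 k t] assms(9)[of t] that assms(3) by auto
  have sumD: "(\<Sum>k=1..K. D k t) = Da t" for t by (simp add: Da_def Dagg_def)
  have fins: "f_Ins M T K D V p cr \<Theta> rd \<pi>' = f_No M T K D p cr \<Theta> rd"
  proof -
    have "(\<Sum>t\<in>T. (\<integral>\<omega>. Cs K D V p t rd (\<Theta> t \<omega>) \<partial>M)) = (\<Sum>t\<in>T. \<Sum>k=1..K. \<pi>' k t * D k t)"
      by (rule sum.cong) (auto simp: cs uns \<pi>'_def intro!: sum.cong)
    also have "\<dots> = (\<Sum>k=1..K. \<Sum>t\<in>T. \<pi>' k t * D k t)" by (rule sum.swap)
    finally show ?thesis unfolding f_Ins_def f_No_def by simp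
  qed
  have feas: "Ins_feasible M T K D V p cr \<xi> \<Theta> rd \<pi>'"
    unfolding Ins_feasible_def using rd0 fno fins u0 Vp
    by (auto simp: \<pi>'_def algebra_simps intro!: mult_right_mono)
  have opt: "(\<Sum>k=1..K. \<Sum>t\<in>T. \<pi>s k t * D k t) \<le> (\<Sum>k=1..K. \<Sum>t\<in>T. \<pi>' k t * D k t)"
    using assms(12) feas unfolding Ins_optimal_def by blast
  have "(\<Sum>t\<in>T. \<Sum>k=1..K. (\<pi>s k t + p) * D k t)
      = (\<Sum>k=1..K. \<Sum>t\<in>T. \<pi>s k t * D k t) + (\<Sum>t\<in>T. p * Da t)"
    by (simp add: distrib_right sum.distrib sum_distrib_left[symmetric] Da_def Dagg_def sum.swap[of _ T])
  also have "\<dots> \<le> (\<Sum>k=1..K. \<Sum>t\<in>T. \<pi>' k t * D k t) + (\<Sum>t\<in>T. p * Da t)"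
    using opt by simp
  also have "\<dots> = (\<Sum>t\<in>T. (\<Sum>k=1..K. \<pi>' k t * D k t) + p * Da t)"
    by (simp add: sum.distrib sum.swap[of _ T])
  also have "\<dots> = (\<Sum>t\<in>T. p * S t + (\<Sum>k=1..K. V k t * (D k t * (1 - S t / Da t))))"
  proof (rule sum.cong)
    fix t assume t: "t \<in> T"
    have Dp: "Da t > 0" using assms(5)[OF t] Da_def by simp
    have "(\<Sum>k=1..K. \<pi>' k t * D k t) = (\<Sum>k=1..K. V k t * (D k t * (1 - S t / Da t))) - p * (1 - S t / Da t) * (\<Sum>k=1..K. D k t)"
    proof -
      have "(\<Sum>k=1..K. \<pi>' k t * D k t) = (\<Sum>k=1..K. V k t * (D k t * (1 - S t / Da t)) - p * (1 - S t / Da t) * D k t)"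
        by (rule sum.cong) (simp_all add: \<pi>'_def uns[OF t] algebra_simps diff_divide_distrib)
      also have "\<dots> = (\<Sum>k=1..K. V k t * (D k t * (1 - S t / Da t))) - p * (1 - S t / Da t) * (\<Sum>k=1..K. D k t)"
        by (simp add: sum_subtractf sum_distrib_left)
      finally show ?thesis .
    qed
    moreover have "p * (1 - S t / Da t) * Da t = p * Da t - p * S t" using Dp by (simp add: field_simps)
    ultimately show "(\<Sum>k=1..K. \<pi>' k t * D k t) + p * Da t = p * S t + (\<Sum>k=1..K. V k t * (D k t * (1 - S t / Da t)))"
      unfolding sumD by linarith
  qed simp
  finally show ?thesis using del by (simp add: S_def)
qed

end
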